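(* Let $M=\begin{pmatrix}A&B\\ C&D\end{pmatrix}$ be an operator matrix on $X\oplus Y$, where $A\in\mathcal{L}(X)$ and $D\in\mathcal{L}(Y)$ have g-Drazin inverses, $B\in\mathcal{L}(Y,X)$, $C\in\mathcal{L}(X,Y)$. If $ABC=0$, $ABD=0$, $DCB=0$, $BCBC=0$ and $BCBD=0$, then $M$ has a g-Drazin inverse in $\mathcal{L}(X\oplus Y)$.
   Context: $X,Y$ are complex Banach spaces; $\mathcal{L}(X)$ denotes the Banach algebra of bounded linear operators on $X$, and $\mathcal{L}(Y,X)$ the bounded operators from $Y$ to $X$. An element $a$ of a unital Banach algebra $\mathcal{A}$ is quasinilpotent if $\lim_{n\to\infty}\|a^n\|^{1/n}=0$. An element $a\in\mathcal{A}$ has a g-Drazin (generalized Drazin) inverse if there exists $x\in\mathcal{A}$ with $x=xax$, $ax=xa$, and $a-a^2x$ quasinilpotent; such $x$ is unique and is denoted $a^d$. *)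

theory Defs
  imports "HOL-Analysis.Analysis"
begin

class complex_normed_vector = real_normed_vector +
  fixes scaleC :: "complex \<Rightarrow> 'a \<Rightarrow> 'a" (infixr \<open>*\<^sub>C\<close> 75)
  assumes scaleC_add_right: "a *\<^sub>C (x + y) = a *\<^sub>C x + a *\<^sub>C y"
    and scaleC_add_left: "(a + b) *\<^sub>C x = a *\<^sub>C x + b *\<^sub>C x"
    and scaleC_scaleC: "a *\<^sub>C (b *\<^sub>C x) = (a * b) *\<^sub>C x"
    and scaleC_one: "1 *\<^sub>C x = x"
    and scaleR_scaleC: "scaleR r x = complex_of_real r *\<^sub>C x"
    and norm_scaleC: "norm (a *\<^sub>C x) = cmod a * norm x"

instantiation prod :: (complex_normed_vector, complex_normed_vector) complex_normed_vector
begin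
definition scaleC_prod_def: "a *\<^sub>C z = (a *\<^sub>C fst z, a *\<^sub>C snd z)"
instance
proof
  fix a b :: complex and x y :: "'a \<times> 'b" and r :: real
  show "a *\<^sub>C (x + y) = a *\<^sub>C x + a *\<^sub>C y"
    by (simp add: scaleC_prod_def scaleC_add_right)
  show "(a + b) *\<^sub>C x = a *\<^sub>C x + b *\<^sub>C x"
    by (simp add: scaleC_prod_def scaleC_add_left)
  show "a *\<^sub>C (b *\<^sub>C x) = (a * b) *\<^sub>C x"
    by (simp add: scaleC_prod_def scaleC_scaleC)
  show "1 *\<^sub>C x = x"
    by (simp add: scaleC_prod_def scaleC_one)
  show "scaleR r x = complex_of_real r *\<^sub>C x"
    by (simp add: scaleC_prod_def scaleR_scaleC prod_eq_iff)
  show "norm (a *\<^sub>C x) = cmod a * norm x"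
  proof -
    have "norm (a *\<^sub>C x) = sqrt ((cmod a)\<^sup>2 * ((norm (fst x))\<^sup>2 + (norm (snd x))\<^sup>2))"
      by (simp add: scaleC_prod_def norm_prod_def norm_scaleC power_mult_distrib algebra_simps)
    also have "\<dots> = cmod a * norm x"
      by (simp add: real_sqrt_mult norm_prod_def)
    finally show ?thesis .
  qed
qed
end

definition clin_op :: "('a::complex_normed_vector \<Rightarrow> 'b::complex_normed_vector) \<Rightarrow> bool" where
  "clin_op f \<longleftrightarrow> bounded_linear f \<and> (\<forall>c x. f (c *\<^sub>C x) = c *\<^sub>C f x)"

definition quasinilpotent_op :: "('a::complex_normed_vector \<Rightarrow> 'a) \<Rightarrow> bool" where
  "quasinilpotent_op T \<longleftrightarrow> (\<lambda>n. root n (onorm (T ^^ n))) \<longlonglongrightarrow> 0"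

definition has_gDrazin :: "('a::complex_normed_vector \<Rightarrow> 'a) \<Rightarrow> bool" where
  "has_gDrazin T \<longleftrightarrow> (\<exists>S. clin_op S \<and> S \<circ> T \<circ> S = S \<and> T \<circ> S = S \<circ> T \<and>
      quasinilpotent_op (\<lambda>x. T x - T (T (S x))))"

definition op_matrix :: "('a \<Rightarrow> 'a) \<Rightarrow> ('b \<Rightarrow> 'a) \<Rightarrow> ('a \<Rightarrow> 'b) \<Rightarrow> ('b \<Rightarrow> 'b)
    \<Rightarrow> ('a::complex_normed_vector \<times> 'b::complex_normed_vector \<Rightarrow> 'a \<times> 'b)" where
  "op_matrix A B C D = (\<lambda>(x, y). (A x + B y, C x + D y))"

end

theory Submission
  imports Defs
begin


lemma scaleC_zero_right[simp]: "c *\<^sub>C (0::'a::complex_normed_vector) = 0"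
proof -
  have "c *\<^sub>C (0::'a) = c *\<^sub>C 0 + c *\<^sub>C 0" by (metis scaleC_add_right add_0)
  then show ?thesis by simp
qed

lemma scaleC_diff_right: "c *\<^sub>C ((x::'a::complex_normed_vector) - y) = c *\<^sub>C x - c *\<^sub>C y"
  by (metis add_diff_cancel diff_add_cancel scaleC_add_right)

lemma bounded_linear_scaleC: "bounded_linear (\<lambda>x::'a::complex_normed_vector. c *\<^sub>C x)"
proof
  fix x y :: 'a and r :: real
  show "c *\<^sub>C (x + y) = c *\<^sub>C x + c *\<^sub>C y" by (rule scaleC_add_right)
  show "c *\<^sub>C (r *\<^sub>R x) = r *\<^sub>R (c *\<^sub>C x)"
    by (simp add: scaleR_scaleC scaleC_scaleC mult.commute)
  show "\<exists>K. \<forall>x. norm (c *\<^sub>C x) \<le> norm x * K"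
    by (rule exI[of _ "cmod c"]) (simp add: norm_scaleC mult.commute)
qed

lemma clin_opD: "clin_op f \<Longrightarrow> bounded_linear f" by (simp add: clin_op_def)
lemma clin_op_scaleC: "clin_op f \<Longrightarrow> f (c *\<^sub>C x) = c *\<^sub>C f x" by (simp add: clin_op_def)

lemma clin_op_comp[intro]: "clin_op f \<Longrightarrow> clin_op g \<Longrightarrow> clin_op (f \<circ> g)"
  unfolding clin_op_def comp_def by (auto intro: bounded_linear_compose)

lemma clin_op_comp'[intro]: "clin_op f \<Longrightarrow> clin_op g \<Longrightarrow> clin_op (\<lambda>x. f (g x))"
  using clin_op_comp[of f g] by (simp add: comp_def)

lemma clin_op_add[intro]: "clin_op f \<Longrightarrow> clin_op g \<Longrightarrow> clin_op (\<lambda>x. f x + g x)"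
  unfolding clin_op_def by (auto intro: bounded_linear_add simp: scaleC_add_right)

lemma clin_op_diff[intro]: "clin_op f \<Longrightarrow> clin_op g \<Longrightarrow> clin_op (\<lambda>x. f x - g x)"
  unfolding clin_op_def by (auto intro: bounded_linear_sub simp: scaleC_diff_right)

lemma clin_op_minus[intro]: "clin_op f \<Longrightarrow> clin_op (\<lambda>x. - f x)"
  using clin_op_diff[of "\<lambda>_. 0" f]
  unfolding clin_op_def by (auto intro: bounded_linear_minus simp: scaleC_diff_right)

lemma clin_op_zero[intro]: "clin_op (\<lambda>x. 0)"
  unfolding clin_op_def by simp

lemma clin_op_ident[intro]: "clin_op (\<lambda>x. x)"
  unfolding clin_op_def by (simp add: bounded_linear_ident)

lemma clin_op_id[intro]: "clin_op id"
  using clin_op_ident by (simp add: id_def)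

lemma clin_op_fst[intro]: "clin_op fst"
  unfolding clin_op_def by (simp add: bounded_linear_fst scaleC_prod_def)

lemma clin_op_snd[intro]: "clin_op snd"
  unfolding clin_op_def by (simp add: bounded_linear_snd scaleC_prod_def)

lemma clin_op_Pair[intro]: "clin_op f \<Longrightarrow> clin_op g \<Longrightarrow> clin_op (\<lambda>x. (f x, g x))"
  unfolding clin_op_def by (auto intro: bounded_linear_Pair simp: scaleC_prod_def)

lemma funpow0: "f ^^ 0 = (\<lambda>x. x)" by (simp add: id_def)
lemma funpowS: "f ^^ Suc n = (\<lambda>x. f ((f ^^ n) x))" by (simp add: comp_def)

lemma clin_op_funpow[intro]: "clin_op (f::'a::complex_normed_vector\<Rightarrow>'a) \<Longrightarrow> clin_op (f ^^ n)"
  by (induction n) (auto simp only: funpow0 funpowS)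

lemma bl_funpow: "bounded_linear (f::'a::real_normed_vector\<Rightarrow>'a) \<Longrightarrow> bounded_linear (f ^^ n)"
  by (induction n) (auto simp only: funpow0 funpowS intro: bounded_linear_compose bounded_linear_ident)

lemma onorm_funpow: "bounded_linear (f::'a::real_normed_vector\<Rightarrow>'a) \<Longrightarrow> onorm (f ^^ n) \<le> onorm f ^ n"
proof (induction n)
  case 0 then show ?case using onorm_id_le by (simp only: funpow0 power_0)
next
  case (Suc n)
  have "onorm (f ^^ Suc n) = onorm (f \<circ> f ^^ n)" by simp
  also have "\<dots> \<le> onorm f * onorm (f ^^ n)"
    using onorm_compose[OF Suc.prems bl_funpow[OF Suc.prems]] .
  also have "\<dots> \<le> onorm f * onorm f ^ n"
    using Suc onorm_pos_le[OF Suc.prems] by (simp add: mult_left_mono)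
  finally show ?case by (simp only: power_Suc)
qed

lemma qnil_imp_K:
  fixes T :: "'a::complex_normed_vector \<Rightarrow> 'a"
  assumes bl: "bounded_linear T" and q: "quasinilpotent_op T" and e: "\<epsilon> > 0"
  shows "\<exists>K. \<forall>n. onorm (T^^n) \<le> K * \<epsilon>^n"
proof -
  have "(\<lambda>n. root n (onorm (T ^^ n))) \<longlonglongrightarrow> 0" using q by (simp add: quasinilpotent_op_def)
  from LIMSEQ_D[OF this e] obtain N where N: "\<forall>n\<ge>N. norm (root n (onorm (T ^^ n)) - 0) < \<epsilon>" by blast
  define N' where "N' = max N 1"
  define K where "K = 1 + (\<Sum>n<N'. onorm (T^^n) / \<epsilon>^n)"
  have nn: "\<And>n. 0 \<le> onorm (T^^n)" by (rule onorm_pos_le[OF bl_funpow[OF bl]])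
  have K1: "1 \<le> K" unfolding K_def using nn e by (auto intro!: sum_nonneg)
  have "onorm (T^^n) \<le> K * \<epsilon>^n" for n
  proof (cases "n < N'")
    case True
    have "onorm (T^^n) / \<epsilon>^n \<le> (\<Sum>n<N'. onorm (T^^n) / \<epsilon>^n)"
      by (rule member_le_sum) (use True nn e in auto)
    also have "\<dots> \<le> K" unfolding K_def by simp
    finally show ?thesis using e by (simp add: pos_divide_le_eq)
  next
    case False
    then have n: "n \<ge> N" "n > 0" unfolding N'_def by auto
    have r: "root n (onorm (T ^^ n)) < \<epsilon>" using N n nn[of n] by auto
    have "onorm (T^^n) = root n (onorm (T ^^ n)) ^ n" using n nn[of n] by simp
    also have "\<dots> \<le> \<epsilon>^n" by (rule power_mono) (use r nn in \<open>auto intro: real_root_ge_zero\<close>)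
    also have "\<dots> \<le> K * \<epsilon>^n" using K1 e by simp
    finally show ?thesis .
  qed
  then show ?thesis by blast
qed

lemma K_imp_qnil:
  fixes T :: "'a::complex_normed_vector \<Rightarrow> 'a"
  assumes bl: "bounded_linear T" and K: "\<And>\<epsilon>. \<epsilon> > 0 \<Longrightarrow> \<exists>K. \<forall>n. onorm (T^^n) \<le> K * \<epsilon>^n"
  shows "quasinilpotent_op T"
  unfolding quasinilpotent_op_def
proof (rule LIMSEQ_I)
  fix r :: real assume r: "r > 0"
  obtain K where K: "\<forall>n. onorm (T^^n) \<le> K * (r/4)^n" using K[of "r/4"] r by auto
  define K' where "K' = max K 1"
  have K'pos: "K' > 0" unfolding K'_def by simp
  have "(\<lambda>n. root n K') \<longlonglongrightarrow> 1" by (rule LIMSEQ_root_const[OF K'pos])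
  from LIMSEQ_D[OF this, of 1] obtain N where N: "\<forall>n\<ge>N. norm (root n K' - 1) < 1" by auto
  have nn: "\<And>n. 0 \<le> onorm (T^^n)" by (rule onorm_pos_le[OF bl_funpow[OF bl]])
  have "norm (root n (onorm (T ^^ n)) - 0) < r" if n: "n \<ge> max N 1" for n
  proof -
    have n0: "n > 0" using n by auto
    have "K * (r/4)^n \<le> K' * (r/4)^n" unfolding K'_def using r by (intro mult_right_mono) auto
    then have "onorm (T^^n) \<le> K' * (r/4)^n" using K[rule_format, of n] by linarith
    then have "root n (onorm (T ^^ n)) \<le> root n (K' * (r/4)^n)" using n0 by simp
    also have "\<dots> = root n K' * (r/4)" using n0 r real_root_power_cancel[of n "r/4"] by (simp only: real_root_mult)
    also have "\<dots> \<le> 2 * (r/4)" using N n r by (intro mult_right_mono) auto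
    finally have "root n (onorm (T ^^ n)) \<le> r/2" by simp
    moreover have "0 \<le> root n (onorm (T ^^ n))" using nn by (simp add: real_root_ge_zero)
    ultimately show ?thesis using r by simp
  qed
  then show "\<exists>no. \<forall>n\<ge>no. norm (root n (onorm (T ^^ n)) - 0) < r" by blast
qed

lemma qnil_iff_K:
  fixes T :: "'a::complex_normed_vector \<Rightarrow> 'a"
  assumes bl: "bounded_linear T"
  shows "quasinilpotent_op T \<longleftrightarrow> (\<forall>\<epsilon>>0. \<exists>K. \<forall>n. onorm (T^^n) \<le> K * \<epsilon>^n)"
  using qnil_imp_K[OF bl] K_imp_qnil[OF bl] by blast

lemma qnil_factor:
  fixes T :: "'a::complex_normed_vector \<Rightarrow> 'a" and g :: "'b::complex_normed_vector \<Rightarrow> 'b"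
  assumes blT: "bounded_linear T" and blf: "bounded_linear f" and blh: "bounded_linear h"
    and blg: "bounded_linear g" and qg: "quasinilpotent_op g"
    and eq: "\<And>n. T^^(Suc n) = f \<circ> (g^^n) \<circ> h"
  shows "quasinilpotent_op T"
proof (rule K_imp_qnil[OF blT])
  fix \<epsilon> :: real assume e: "\<epsilon> > 0"
  obtain K where K: "\<forall>n. onorm (g^^n) \<le> K * \<epsilon>^n" using qnil_imp_K[OF blg qg e] by auto
  have K0: "K \<ge> 0" using K[rule_format, of 0] onorm_pos_le[OF bl_funpow[OF blg], of 0] by simp
  define C where "C = onorm f * onorm h"
  have C0: "C \<ge> 0" unfolding C_def using onorm_pos_le[OF blf] onorm_pos_le[OF blh] by simp
  have "onorm (T^^n) \<le> (1 + C * K / \<epsilon>) * \<epsilon>^n" for n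
  proof (cases n)
    case 0
    have "onorm (T^^n) \<le> 1" using 0 onorm_id_le by (simp only: funpow0)
    also have "\<dots> \<le> (1 + C * K / \<epsilon>) * \<epsilon>^n" using 0 C0 K0 e by simp
    finally show ?thesis .
  next
    case (Suc m)
    have "onorm (T^^n) = onorm ((f \<circ> (g^^m)) \<circ> h)" using eq[of m] Suc by simp
    also have "\<dots> \<le> onorm (f \<circ> (g^^m)) * onorm h"
      by (rule onorm_compose) (use blf blh bl_funpow[OF blg] in \<open>auto intro: bounded_linear_compose simp: comp_def\<close>)
    also have "\<dots> \<le> (onorm f * onorm (g^^m)) * onorm h"
      by (rule mult_right_mono[OF onorm_compose[OF blf bl_funpow[OF blg]] onorm_pos_le[OF blh]])
    also have "\<dots> \<le> (onorm f * (K * \<epsilon>^m)) * onorm h"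
      using K onorm_pos_le[OF blf] onorm_pos_le[OF blh] by (intro mult_right_mono mult_left_mono) auto
    also have "\<dots> = (C * K / \<epsilon>) * \<epsilon>^n" using Suc e unfolding C_def by (simp add: field_simps)
    also have "\<dots> \<le> (1 + C * K / \<epsilon>) * \<epsilon>^n" using e by (intro mult_right_mono) auto
    finally show ?thesis .
  qed
  then show "\<exists>K. \<forall>n. onorm (T^^n) \<le> K * \<epsilon>^n" by blast
qed



lemma funpow_comm_pt:
  assumes "\<And>x. v (u x) = u (v x)"
  shows "u ((v ^^ n) y) = (v ^^ n) (u y)"
  by (induction n arbitrary: y) (auto simp: assms[symmetric])

lemma funpow_prod_pt:
  assumes "\<And>x. v (u x) = u (v x)"
  shows "((\<lambda>x. v (u x)) ^^ n) y = (v ^^ n) ((u ^^ n) y)"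
proof (induction n arbitrary: y)
  case 0 then show ?case by simp
next
  case (Suc n)
  have "((\<lambda>x. v (u x)) ^^ Suc n) y = v (u ((v ^^ n) ((u ^^ n) y)))" using Suc by simp
  also have "\<dots> = v ((v ^^ n) (u ((u ^^ n) y)))" using funpow_comm_pt[of v u, OF assms] by simp
  finally show ?case by simp
qed

lemma qnil_comm:
  fixes u v :: "'a::complex_normed_vector \<Rightarrow> 'a"
  assumes blu: "bounded_linear u" and blv: "bounded_linear v" and q: "quasinilpotent_op u"
    and c: "\<And>x. v (u x) = u (v x)"
  shows "quasinilpotent_op (\<lambda>x. v (u x))"
proof (rule K_imp_qnil)
  show bl: "bounded_linear (\<lambda>x. v (u x))" by (rule bounded_linear_compose[OF blv blu])
  fix \<epsilon> :: real assume e: "\<epsilon> > 0"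
  define e' where "e' = \<epsilon> / (onorm v + 1)"
  have v0: "onorm v \<ge> 0" by (rule onorm_pos_le[OF blv])
  have e': "e' > 0" unfolding e'_def using e v0 by simp
  obtain K where K: "\<forall>n. onorm (u^^n) \<le> K * e'^n" using qnil_imp_K[OF blu q e'] by auto
  have K0: "K \<ge> 0" using K[rule_format, of 0] onorm_pos_le[OF bl_funpow[OF blu], of 0] by simp
  have "onorm ((\<lambda>x. v (u x))^^n) \<le> K * \<epsilon>^n" for n
  proof -
    have eq: "(\<lambda>x. v (u x))^^n = (v^^n) \<circ> (u^^n)" using funpow_prod_pt[of v u, OF c] by (auto simp: fun_eq_iff)
    have "onorm ((\<lambda>x. v (u x))^^n) \<le> onorm (v^^n) * onorm (u^^n)"
      unfolding eq by (rule onorm_compose[OF bl_funpow[OF blv] bl_funpow[OF blu]])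
    also have "\<dots> \<le> onorm v ^ n * (K * e'^n)"
      by (rule mult_mono[OF onorm_funpow[OF blv] K[rule_format]]) (use v0 onorm_pos_le[OF bl_funpow[OF blu]] in auto)
    also have "\<dots> = K * (onorm v * e')^n" by (simp add: power_mult_distrib)
    also have "\<dots> \<le> K * \<epsilon>^n"
    proof (rule mult_left_mono[OF _ K0], rule power_mono)
      show "onorm v * e' \<le> \<epsilon>" unfolding e'_def using e v0 by (simp add: field_simps)
      show "0 \<le> onorm v * e'" using v0 e' by simp
    qed
    finally show ?thesis .
  qed
  then show "\<exists>K. \<forall>n. onorm ((\<lambda>x. v (u x))^^n) \<le> K * \<epsilon>^n" by blast
qed

lemma qnil_sq:
  fixes u :: "'a::complex_normed_vector \<Rightarrow> 'a"
  assumes blu: "bounded_linear u" and q: "quasinilpotent_op (\<lambda>x. u (u x))"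
  shows "quasinilpotent_op u"
proof (rule K_imp_qnil[OF blu])
  fix \<epsilon> :: real assume e: "\<epsilon> > 0"
  have bl2: "bounded_linear (\<lambda>x. u (u x))" by (rule bounded_linear_compose[OF blu blu])
  obtain K where K: "\<forall>n. onorm ((\<lambda>x. u (u x))^^n) \<le> K * (\<epsilon>^2)^n" using qnil_imp_K[OF bl2 q, of "\<epsilon>^2"] e by auto
  have K0: "K \<ge> 0" using K[rule_format, of 0] onorm_pos_le[OF bl_funpow[OF bl2], of 0] by simp
  have u0: "onorm u \<ge> 0" by (rule onorm_pos_le[OF blu])
  have sq: "(\<lambda>x. u (u x))^^k = u^^(2*k)" for k
  proof -
    have "(\<lambda>x. u (u x)) = u^^2" by (simp add: fun_eq_iff numeral_2_eq_2)
    then show ?thesis by (simp add: funpow_mult mult.commute)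
  qed
  have even: "onorm (u^^(2*k)) \<le> K * \<epsilon>^(2*k)" for k using K[rule_format, of k] sq[of k] by (simp add: power_mult)
  define K' where "K' = K + onorm u * K / \<epsilon>"
  have "onorm (u^^n) \<le> K' * \<epsilon>^n" for n
  proof (cases "even n")
    case True
    then obtain k where n: "n = 2*k" by blast
    have "onorm (u^^n) \<le> K * \<epsilon>^n" using even[of k] n by simp
    also have "\<dots> \<le> K' * \<epsilon>^n" unfolding K'_def using e u0 K0 by (intro mult_right_mono) auto
    finally show ?thesis .
  next
    case False
    then obtain k where n: "n = Suc (2*k)" by (metis oddE Suc_eq_plus1)
    have "onorm (u^^n) = onorm (u \<circ> u^^(2*k))" using n by simp
    also have "\<dots> \<le> onorm u * onorm (u^^(2*k))" by (rule onorm_compose[OF blu bl_funpow[OF blu]])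
    also have "\<dots> \<le> onorm u * (K * \<epsilon>^(2*k))" by (rule mult_left_mono[OF even u0])
    also have "\<dots> = (onorm u * K / \<epsilon>) * \<epsilon>^n" using n e by (simp add: field_simps)
    also have "\<dots> \<le> K' * \<epsilon>^n" unfolding K'_def using e K0 by (intro mult_right_mono) auto
    finally show ?thesis .
  qed
  then show "\<exists>K. \<forall>n. onorm (u^^n) \<le> K * \<epsilon>^n" by blast
qed

lemma qnil_nilpotent:
  fixes T :: "'a::complex_normed_vector \<Rightarrow> 'a"
  assumes bl: "bounded_linear T" and z: "T^^k = (\<lambda>_. 0)"
  shows "quasinilpotent_op T"
  unfolding quasinilpotent_op_def
proof (rule LIMSEQ_I)
  fix r :: real assume r: "r > 0"
  have "norm (root n (onorm (T ^^ n)) - 0) < r" if "n \<ge> k" for n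
  proof -
    have "T^^n = T^^(n-k) \<circ> T^^k" using that by (simp add: funpow_add[symmetric])
    also have "\<dots> = (\<lambda>_. 0)" using z linear_simps(3)[OF bl_funpow[OF bl]]
      by (auto simp: fun_eq_iff)
    finally show ?thesis using r by (simp add: onorm_zero)
  qed
  then show "\<exists>no. \<forall>n\<ge>no. norm (root n (onorm (T ^^ n)) - 0) < r" by blast
qed

lemma expand_zero_prod:
  fixes t1 t2 :: "'a::real_normed_vector \<Rightarrow> 'a"
  assumes bl1: "bounded_linear t1" and bl2: "bounded_linear t2" and z: "\<And>x. t1 (t2 x) = 0"
  shows "((\<lambda>x. t1 x + t2 x)^^n) x = (\<Sum>i\<le>n. (t2^^i) ((t1^^(n-i)) x))"
proof (induction n arbitrary: x)
  case 0 then show ?case by simp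
next
  case (Suc n)
  interpret l1: bounded_linear t1 by fact
  interpret l2: bounded_linear t2 by fact
  have "((\<lambda>x. t1 x + t2 x)^^Suc n) x = t1 (\<Sum>i\<le>n. (t2^^i) ((t1^^(n-i)) x)) + t2 (\<Sum>i\<le>n. (t2^^i) ((t1^^(n-i)) x))"
    using Suc by simp
  also have "t1 (\<Sum>i\<le>n. (t2^^i) ((t1^^(n-i)) x)) = (\<Sum>i\<le>n. t1 ((t2^^i) ((t1^^(n-i)) x)))"
    by (rule l1.sum)
  also have "\<dots> = (\<Sum>i\<in>{0}. t1 ((t2^^i) ((t1^^(n-i)) x)))"
  proof (rule sum.mono_neutral_right)
    show "\<forall>i\<in>{..n} - {0}. t1 ((t2 ^^ i) ((t1 ^^ (n - i)) x)) = 0"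
    proof
      fix i assume "i \<in> {..n} - {0}"
      then obtain j where "i = Suc j" by (cases i) auto
      then show "t1 ((t2 ^^ i) ((t1 ^^ (n - i)) x)) = 0" using z by simp
    qed
  qed auto
  also have "\<dots> = t1 ((t1^^n) x)" by simp
  also have "t2 (\<Sum>i\<le>n. (t2^^i) ((t1^^(n-i)) x)) = (\<Sum>i\<le>n. t2 ((t2^^i) ((t1^^(n-i)) x)))"
    by (simp add: l2.sum)
  finally have L: "((\<lambda>x. t1 x + t2 x)^^Suc n) x = t1 ((t1^^n) x) + (\<Sum>i\<le>n. t2 ((t2^^i) ((t1^^(n-i)) x)))" .
  have R: "(\<Sum>i\<le>Suc n. (t2^^i) ((t1^^(Suc n-i)) x)) = t1 ((t1^^n) x) + (\<Sum>i\<le>n. t2 ((t2^^i) ((t1^^(n-i)) x)))"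
    by (simp del: sum.atMost_Suc add: sum.atMost_Suc_shift)
  show ?case by (simp only: L R)
qed

lemma qnil_zero_prod:
  fixes t1 t2 :: "'a::complex_normed_vector \<Rightarrow> 'a"
  assumes bl1: "bounded_linear t1" and bl2: "bounded_linear t2" and z: "\<And>x. t1 (t2 x) = 0"
    and q1: "quasinilpotent_op t1" and q2: "quasinilpotent_op t2"
  shows "quasinilpotent_op (\<lambda>x. t1 x + t2 x)"
proof (rule K_imp_qnil)
  show bl: "bounded_linear (\<lambda>x. t1 x + t2 x)" by (rule bounded_linear_add[OF bl1 bl2])
  fix \<epsilon> :: real assume e: "\<epsilon> > 0"
  obtain K1 where K1: "\<forall>n. onorm (t1^^n) \<le> K1 * (\<epsilon>/2)^n" using qnil_imp_K[OF bl1 q1, of "\<epsilon>/2"] e by auto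
  obtain K2 where K2: "\<forall>n. onorm (t2^^n) \<le> K2 * (\<epsilon>/2)^n" using qnil_imp_K[OF bl2 q2, of "\<epsilon>/2"] e by auto
  have K10: "K1 \<ge> 0" using K1[rule_format, of 0] onorm_pos_le[OF bl_funpow[OF bl1], of 0] by simp
  have K20: "K2 \<ge> 0" using K2[rule_format, of 0] onorm_pos_le[OF bl_funpow[OF bl2], of 0] by simp
  have "onorm ((\<lambda>x. t1 x + t2 x)^^n) \<le> (K2 * K1) * \<epsilon>^n" for n
  proof -
    have eq: "(\<lambda>x. t1 x + t2 x)^^n = (\<lambda>x. \<Sum>i\<le>n. ((t2^^i) \<circ> (t1^^(n-i))) x)"
      using expand_zero_prod[OF bl1 bl2 z] by (auto simp: fun_eq_iff)
    have "onorm ((\<lambda>x. t1 x + t2 x)^^n) \<le> (\<Sum>i\<le>n. onorm ((t2^^i) \<circ> (t1^^(n-i))))"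
      unfolding eq by (rule onorm_sum) (auto intro: bounded_linear_compose bl_funpow bl1 bl2 simp: comp_def)
    also have "\<dots> \<le> (\<Sum>i\<le>n. (K2 * (\<epsilon>/2)^i) * (K1 * (\<epsilon>/2)^(n-i)))"
    proof (rule sum_mono)
      fix i assume "i \<in> {..n}"
      have "onorm ((t2^^i) \<circ> (t1^^(n-i))) \<le> onorm (t2^^i) * onorm (t1^^(n-i))"
        by (rule onorm_compose[OF bl_funpow[OF bl2] bl_funpow[OF bl1]])
      also have "\<dots> \<le> (K2 * (\<epsilon>/2)^i) * (K1 * (\<epsilon>/2)^(n-i))"
        by (rule mult_mono[OF K2[rule_format] K1[rule_format]]) (use K20 e onorm_pos_le[OF bl_funpow[OF bl1]] in auto)
      finally show "onorm ((t2^^i) \<circ> (t1^^(n-i))) \<le> (K2 * (\<epsilon>/2)^i) * (K1 * (\<epsilon>/2)^(n-i))" .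
    qed
    also have "\<dots> = (\<Sum>i\<le>n. (K2 * K1) * (\<epsilon>/2)^n)"
    proof (rule sum.cong[OF refl])
      fix i assume "i \<in> {..n}"
      then have "(\<epsilon>/2)^i * (\<epsilon>/2)^(n-i) = (\<epsilon>/2)^n" by (simp add: power_add[symmetric])
      then show "(K2 * (\<epsilon>/2)^i) * (K1 * (\<epsilon>/2)^(n-i)) = (K2 * K1) * (\<epsilon>/2)^n"
        by (metis mult.assoc mult.left_commute)
    qed
    also have "\<dots> = (K2 * K1) * (real (Suc n) * (\<epsilon>/2)^n)" by simp
    also have "\<dots> \<le> (K2 * K1) * \<epsilon>^n"
    proof (rule mult_left_mono)
      have "real (Suc n) \<le> 2^n" using less_exp[of n] by (metis Suc_leI of_nat_le_iff of_nat_numeral of_nat_power)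
      then have "real (Suc n) * (\<epsilon>/2)^n \<le> 2^n * (\<epsilon>/2)^n" using e by (intro mult_right_mono) auto
      also have "\<dots> = \<epsilon>^n" by (simp add: power_mult_distrib[symmetric])
      finally show "real (Suc n) * (\<epsilon>/2)^n \<le> \<epsilon>^n" .
    qed (use K10 K20 in simp)
    finally show ?thesis .
  qed
  then show "\<exists>K. \<forall>n. onorm ((\<lambda>x. t1 x + t2 x)^^n) \<le> K * \<epsilon>^n" by blast
qed



definition gd :: "('a::complex_normed_vector \<Rightarrow> 'a) \<Rightarrow> ('a \<Rightarrow> 'a) \<Rightarrow> bool" where
  "gd T S \<longleftrightarrow> clin_op S \<and> (\<forall>x. S (T (S x)) = S x) \<and> (\<forall>x. T (S x) = S (T x)) \<and>
     quasinilpotent_op (\<lambda>x. T x - T (T (S x)))"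

lemma has_gDrazin_iff: "has_gDrazin T \<longleftrightarrow> (\<exists>S. gd T S)"
  unfolding has_gDrazin_def gd_def by (auto simp: fun_eq_iff)

lemma gdD:
  assumes "gd T S"
  shows "clin_op S" "S (T (S x)) = S x" "T (S x) = S (T x)" "quasinilpotent_op (\<lambda>x. T x - T (T (S x)))"
  using assms unfolding gd_def by auto

lemma gd_nil:
  fixes T :: "'a::complex_normed_vector \<Rightarrow> 'a"
  assumes c: "clin_op T" and z: "T^^k = (\<lambda>_. 0)"
  shows "gd T (\<lambda>_. 0)"
proof -
  have bl: "bounded_linear T" using c by (rule clin_opD)
  have T0: "T 0 = 0" by (rule linear_simps(3)[OF bl])
  have "(\<lambda>x. T x - T (T 0)) = T" using T0 by simp
  then show ?thesis unfolding gd_def using qnil_nilpotent[OF bl z] T0 by auto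
qed

lemma bounded_zero_iter:
  fixes Z :: "'a::complex_normed_vector \<Rightarrow> 'b::real_normed_vector" and t :: "'a \<Rightarrow> 'a"
    and s :: "'b \<Rightarrow> 'b"
  assumes blZ: "bounded_linear Z" and bls: "bounded_linear s" and blt: "bounded_linear t"
    and qt: "quasinilpotent_op t"
    and it: "\<And>n v. Z v = (s^^n) (Z ((t^^n) v))"
  shows "Z v = 0"
proof -
  define e where "e = 1 / (2 * (onorm s + 1))"
  have s0: "onorm s \<ge> 0" by (rule onorm_pos_le[OF bls])
  have e: "e > 0" unfolding e_def using s0 by simp
  obtain K where K: "\<forall>n. onorm (t^^n) \<le> K * e^n" using qnil_imp_K[OF blt qt e] by auto
  have K0: "K \<ge> 0" using K[rule_format, of 0] onorm_pos_le[OF bl_funpow[OF blt], of 0] by simp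
  have se: "onorm s * e \<le> 1/2" unfolding e_def using s0 by (simp add: field_simps)
  have se0: "onorm s * e \<ge> 0" using s0 e by simp
  have bound: "norm (Z v) \<le> (onorm Z * K * norm v) * (1/2)^n" for n
  proof -
    have "norm (Z v) = norm ((s^^n) (Z ((t^^n) v)))" using it[where n=n and v=v] by simp
    also have "\<dots> \<le> onorm (s^^n) * norm (Z ((t^^n) v))" by (rule onorm[OF bl_funpow[OF bls]])
    also have "\<dots> \<le> onorm s ^ n * (onorm Z * (onorm (t^^n) * norm v))"
    proof (rule mult_mono[OF onorm_funpow[OF bls]])
      have "norm (Z ((t^^n) v)) \<le> onorm Z * norm ((t^^n) v)" by (rule onorm[OF blZ])
      also have "\<dots> \<le> onorm Z * (onorm (t^^n) * norm v)"
        by (rule mult_left_mono[OF onorm[OF bl_funpow[OF blt]] onorm_pos_le[OF blZ]])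
      finally show "norm (Z ((t^^n) v)) \<le> onorm Z * (onorm (t^^n) * norm v)" .
    qed (use s0 in auto)
    also have "\<dots> \<le> onorm s ^ n * (onorm Z * ((K * e^n) * norm v))"
      using K onorm_pos_le[OF blZ] s0 by (intro mult_left_mono mult_right_mono) auto
    also have "\<dots> = (onorm Z * K * norm v) * (onorm s * e)^n" by (simp add: power_mult_distrib)
    also have "\<dots> \<le> (onorm Z * K * norm v) * (1/2)^n"
      using onorm_pos_le[OF blZ] K0 se se0 by (intro mult_left_mono power_mono) auto
    finally show ?thesis .
  qed
  have lim: "(\<lambda>n. (onorm Z * K * norm v) * (1/2::real)^n) \<longlonglongrightarrow> 0"
    by (rule tendsto_mult_right_zero) (rule LIMSEQ_power_zero, simp)
  have "norm (Z v) \<le> 0" by (rule LIMSEQ_le_const[OF lim]) (use bound in auto)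
  then show ?thesis by simp
qed

lemma bounded_zero_iter':
  fixes Z :: "'b::real_normed_vector \<Rightarrow> 'a::complex_normed_vector" and t :: "'a \<Rightarrow> 'a"
    and s :: "'b \<Rightarrow> 'b"
  assumes blZ: "bounded_linear Z" and bls: "bounded_linear s" and blt: "bounded_linear t"
    and qt: "quasinilpotent_op t"
    and it: "\<And>n v. Z v = (t^^n) (Z ((s^^n) v))"
  shows "Z v = 0"
proof -
  define e where "e = 1 / (2 * (onorm s + 1))"
  have s0: "onorm s \<ge> 0" by (rule onorm_pos_le[OF bls])
  have e: "e > 0" unfolding e_def using s0 by simp
  obtain K where K: "\<forall>n. onorm (t^^n) \<le> K * e^n" using qnil_imp_K[OF blt qt e] by auto
  have K0: "K \<ge> 0" using K[rule_format, of 0] onorm_pos_le[OF bl_funpow[OF blt], of 0] by simp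
  have se: "onorm s * e \<le> 1/2" unfolding e_def using s0 by (simp add: field_simps)
  have se0: "onorm s * e \<ge> 0" using s0 e by simp
  have bound: "norm (Z v) \<le> (onorm Z * K * norm v) * (1/2)^n" for n
  proof -
    have "norm (Z v) = norm ((t^^n) (Z ((s^^n) v)))" using it[where n=n and v=v] by simp
    also have "\<dots> \<le> onorm (t^^n) * norm (Z ((s^^n) v))" by (rule onorm[OF bl_funpow[OF blt]])
    also have "\<dots> \<le> (K * e^n) * (onorm Z * (onorm s ^ n * norm v))"
    proof (rule mult_mono[OF K[rule_format]])
      have "norm (Z ((s^^n) v)) \<le> onorm Z * norm ((s^^n) v)" by (rule onorm[OF blZ])
      also have "\<dots> \<le> onorm Z * (onorm (s^^n) * norm v)"
        by (rule mult_left_mono[OF onorm[OF bl_funpow[OF bls]] onorm_pos_le[OF blZ]])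
      also have "\<dots> \<le> onorm Z * (onorm s ^ n * norm v)"
        by (rule mult_left_mono[OF mult_right_mono[OF onorm_funpow[OF bls]]]) (use onorm_pos_le[OF blZ] in auto)
      finally show "norm (Z ((s^^n) v)) \<le> onorm Z * (onorm s ^ n * norm v)" .
    qed (use K0 e in auto)
    also have "\<dots> = (onorm Z * K * norm v) * (onorm s * e)^n" by (simp add: power_mult_distrib)
    also have "\<dots> \<le> (onorm Z * K * norm v) * (1/2)^n"
      using onorm_pos_le[OF blZ] K0 se se0 by (intro mult_left_mono power_mono) auto
    finally show ?thesis .
  qed
  have lim: "(\<lambda>n. (onorm Z * K * norm v) * (1/2::real)^n) \<longlonglongrightarrow> 0"
    by (rule tendsto_mult_right_zero) (rule LIMSEQ_power_zero, simp)
  have "norm (Z v) \<le> 0" by (rule LIMSEQ_le_const[OF lim]) (use bound in auto)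
  then show ?thesis by simp
qed



lemma gd_cline:
  fixes U :: "'b::complex_normed_vector \<Rightarrow> 'a::complex_normed_vector" and V :: "'a \<Rightarrow> 'b"
  assumes cU: "clin_op U" and cV: "clin_op V" and g: "gd (\<lambda>x. V (U x)) y"
  shows "gd (\<lambda>x. U (V x)) (\<lambda>x. U (y (y (V x))))"
proof -
  have cy: "clin_op y" using gdD(1)[OF g] .
  have blU: "bounded_linear U" and blV: "bounded_linear V" and bly: "bounded_linear y"
    using cU cV cy by (auto dest: clin_opD)
  have c2: "\<And>z. V (U (y z)) = y (V (U z))" using gdD(3)[OF g] by simp
  have c1: "\<And>z. y (V (U (y z))) = y z" using gdD(2)[OF g] by simp
  have r1: "\<And>z. y (y (V (U z))) = y z" using c1 c2 by metis
  have qg: "quasinilpotent_op (\<lambda>w. V (U w) - V (U (V (U (y w)))))" using gdD(4)[OF g] by simp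
  define p where "p w = w - y (V (U w))" for w
  define g' where "g' w = V (U w) - V (U (V (U (y w))))" for w
  define F where "F x = U (V x) - U (V (U (V (U (y (y (V x)))))))" for x
  have Fx: "F x = U (p (V x))" for x
    unfolding F_def p_def using linear_simps(2)[OF blU] by (simp add: c2 r1)
  have pg: "p (V (U w)) = g' w" for w unfolding p_def g'_def by (simp add: c2)
  have pow: "F^^(Suc n) = U \<circ> (g'^^n) \<circ> (\<lambda>x. p (V x))" for n
  proof (induction n)
    case 0 then show ?case by (auto simp: fun_eq_iff Fx)
  next
    case (Suc n)
    show ?case using Suc by (auto simp: fun_eq_iff Fx pg)
  qed
  have blp: "bounded_linear p" unfolding p_def
    by (intro bounded_linear_sub bounded_linear_ident bounded_linear_compose[OF bly] bounded_linear_compose[OF blV blU])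
  have blg': "bounded_linear g'" unfolding g'_def
    by (intro bounded_linear_sub bounded_linear_compose[OF blV] bounded_linear_compose[OF blU] bly blU blV)
  have blF: "bounded_linear F" unfolding F_def[abs_def]
    by (intro bounded_linear_sub bounded_linear_compose[OF blU] bounded_linear_compose[OF blV]
         bounded_linear_compose[OF bly] blV)
  have qF: "quasinilpotent_op F"
  proof (rule qnil_factor[OF blF blU _ blg' _ pow])
    show "bounded_linear (\<lambda>x. p (V x))" by (rule bounded_linear_compose[OF blp blV])
    show "quasinilpotent_op g'" using qg unfolding g'_def[abs_def] .
  qed
  show ?thesis unfolding gd_def
  proof (intro conjI allI)
    show "clin_op (\<lambda>x. U (y (y (V x))))" using cU cV cy by auto
    show "U (y (y (V (U (V (U (y (y (V x))))))))) = U (y (y (V x)))" for x by (simp add: c2 r1)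
    show "U (V (U (y (y (V x))))) = U (y (y (V (U (V x)))))" for x by (simp add: c2)
    show "quasinilpotent_op (\<lambda>x. U (V x) - U (V (U (V (U (y (y (V x))))))))"
      using qF unfolding F_def[abs_def] .
  qed
qed

lemma gd_square:
  fixes A :: "'a::complex_normed_vector \<Rightarrow> 'a"
  assumes cA: "clin_op A" and g: "gd A S"
  shows "gd (\<lambda>x. A (A x)) (\<lambda>x. S (S x))"
proof -
  have cS: "clin_op S" using gdD(1)[OF g] .
  have blA: "bounded_linear A" and blS: "bounded_linear S" using cA cS by (auto dest: clin_opD)
  have c2: "\<And>z. A (S z) = S (A z)" using gdD(3)[OF g] by simp
  have r1: "\<And>z. S (S (A z)) = S z" using gdD(2)[OF g] c2 by metis
  have qu: "quasinilpotent_op (\<lambda>x. A x - A (A (S x)))" using gdD(4)[OF g] .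
  define u where "u x = A x - A (A (S x))" for x
  have blu: "bounded_linear u" unfolding u_def
    by (intro bounded_linear_sub bounded_linear_compose[OF blA] blA blS)
  have q2: "quasinilpotent_op (\<lambda>x. A (u x))"
  proof (rule qnil_comm[OF blu blA])
    show "quasinilpotent_op u" using qu unfolding u_def[abs_def] .
    show "A (u x) = u (A x)" for x unfolding u_def using linear_simps(2)[OF blA] by (simp add: c2)
  qed
  have eq: "(\<lambda>x. A (u x)) = (\<lambda>x. A (A x) - A (A (A (A (S (S x))))))"
    unfolding u_def using linear_simps(2)[OF blA] by (auto simp: fun_eq_iff c2 r1)
  show ?thesis unfolding gd_def
  proof (intro conjI allI)
    show "clin_op (\<lambda>x. S (S x))" using cS by auto
    show "S (S (A (A (S (S x))))) = S (S x)" for x by (simp add: c2 r1)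
    show "A (A (S (S x))) = S (S (A (A x)))" for x by (simp add: c2)
    show "quasinilpotent_op (\<lambda>x. A (A x) - A (A (A (A (S (S x))))))" using q2 eq by simp
  qed
qed



lemma gd_comm:
  fixes T K :: "'a::complex_normed_vector \<Rightarrow> 'a"
  assumes cT: "clin_op T" and g: "gd T S" and cK: "clin_op K" and c: "\<And>x. K (T x) = T (K x)"
  shows "K (S x) = S (K x)"
proof -
  have cS: "clin_op S" using gdD(1)[OF g] .
  have blT: "bounded_linear T" and blS: "bounded_linear S" and blK: "bounded_linear K"
    using cT cS cK by (auto dest: clin_opD)
  note lT = linear_simps[OF blT] and lS = linear_simps[OF blS] and lK = linear_simps[OF blK]
  have sts: "\<And>z. S (T (S z)) = S z" using gdD(2)[OF g] .
  have ts: "\<And>z. T (S z) = S (T z)" using gdD(3)[OF g] .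
  have r1: "\<And>z. S (S (T z)) = S z" using sts ts by metis
  have c': "\<And>x. T (K x) = K (T x)" using c by simp
  define t where "t v = T v - T (T (S v))" for v
  have qt: "quasinilpotent_op t" using gdD(4)[OF g] unfolding t_def[abs_def] .
  have blt: "bounded_linear t" unfolding t_def[abs_def]
    by (intro bounded_linear_sub blT bounded_linear_compose[OF blT] bounded_linear_compose[OF blS] bounded_linear_ident)
  define Z where "Z v = T (S (K (v - T (S v))))" for v
  have blZ: "bounded_linear Z" unfolding Z_def[abs_def]
    by (intro bounded_linear_compose[OF blT] bounded_linear_compose[OF blS] bounded_linear_compose[OF blK]
        bounded_linear_sub bounded_linear_ident)
  have Z1: "Z v = S (Z (t v))" for v
  proof -
    have aux: "\<And>z. S (T (K (S z))) = S (K (S (T z)))" by (metis c ts)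
    have aux2: "\<And>z. S (S (K (S (T z)))) = S (K (S z))" by (metis c ts r1)
    show ?thesis unfolding Z_def t_def by (simp add: lT lS lK ts r1 c aux aux2)
  qed
  have Zit: "Z v = (S^^n) (Z ((t^^n) v))" for n v
  proof (induction n arbitrary: v)
    case 0 then show ?case by simp
  next
    case (Suc n)
    have "Z v = S ((S^^n) (Z ((t^^n) (t v))))" using Z1[of v] Suc[of "t v"] by simp
    also have "\<dots> = (S^^Suc n) (Z ((t^^Suc n) v))" by (simp add: funpow_swap1)
    finally show ?case .
  qed
  have F1: "Z v = 0" for v by (rule bounded_zero_iter[OF blZ blS blt qt Zit])
  define Y where "Y v = K (T (S v)) - T (S (K (T (S v))))" for v
  have blY: "bounded_linear Y" unfolding Y_def[abs_def]
    by (intro bounded_linear_sub bounded_linear_compose[OF blT] bounded_linear_compose[OF blS]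
        bounded_linear_compose[OF blK] bounded_linear_ident)
  have aux2: "\<And>z. S (S (K (S (T z)))) = S (K (S z))" by (metis c ts r1)
  have Y1: "Y v = t (Y (S v))" for v
    unfolding Y_def t_def by (simp add: lT lS lK ts r1 c' aux2)
  have Yit: "Y v = (t^^n) (Y ((S^^n) v))" for n v
  proof (induction n arbitrary: v)
    case 0 then show ?case by simp
  next
    case (Suc n)
    have "Y v = t ((t^^n) (Y ((S^^n) (S v))))" using Y1[of v] Suc[of "S v"] by simp
    also have "\<dots> = (t^^Suc n) (Y ((S^^Suc n) v))" by (simp add: funpow_swap1)
    finally show ?case .
  qed
  have F2: "Y v = 0" for v by (rule bounded_zero_iter'[OF blY blS blt qt Yit])
  have a0: "S (K (x - T (S x))) = 0"
  proof -
    have "S (K (x - T (S x))) = S (T (S (K (x - T (S x)))))" by (simp add: sts)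
    also have "\<dots> = S (Z x)" unfolding Z_def ..
    finally show ?thesis using F1 lS by simp
  qed
  have a: "S (K x) = S (K (T (S x)))" using a0 lK lS by (simp add: lK lS)
  have tss: "T (S (S x)) = S x" by (simp add: ts r1)
  have b: "K (S x) = T (S (K (S x)))" using F2[of "S x"] unfolding Y_def by (simp add: tss)
  have "S (K x) = S (K (T (S x)))" by (rule a)
  also have "\<dots> = S (T (K (S x)))" by (simp add: c)
  also have "\<dots> = T (S (K (S x)))" by (simp add: ts)
  also have "\<dots> = K (S x)" using b by simp
  finally show ?thesis by simp
qed

lemma gd_sqrt:
  fixes T :: "'a::complex_normed_vector \<Rightarrow> 'a"
  assumes cT: "clin_op T" and g: "gd (\<lambda>x. T (T x)) y"
  shows "gd T (\<lambda>x. T (y x))"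
proof -
  have cy: "clin_op y" using gdD(1)[OF g] .
  have blT: "bounded_linear T" and bly: "bounded_linear y" using cT cy by (auto dest: clin_opD)
  note lT = linear_simps[OF blT] and ly = linear_simps[OF bly]
  have cTT: "clin_op (\<lambda>x. T (T x))" using cT by auto
  have comm: "\<And>x. T (y x) = y (T x)" by (rule gd_comm[OF cTT g cT]) simp
  have f1: "\<And>x. y (T (T (y x))) = y x" using gdD(2)[OF g] .
  have comm': "\<And>x. y (T x) = T (y x)" using comm by simp
  have r: "\<And>x. T (T (y (y x))) = y x" using f1 comm' by metis
  have qg: "quasinilpotent_op (\<lambda>x. T (T x) - T (T (T (T (y x)))))" using gdD(4)[OF g] .
  define u where "u x = T x - T (T (T (y x)))" for x
  have blu: "bounded_linear u" unfolding u_def[abs_def]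
    by (intro bounded_linear_sub blT bounded_linear_compose[OF blT] bounded_linear_compose[OF bly] bounded_linear_ident)
  have uu: "(\<lambda>x. u (u x)) = (\<lambda>x. T (T x) - T (T (T (T (y x)))))"
    unfolding u_def by (auto simp: fun_eq_iff lT ly comm' r)
  have qu: "quasinilpotent_op u" by (rule qnil_sq[OF blu]) (use qg uu in simp)
  show ?thesis unfolding gd_def
  proof (intro conjI allI)
    show "clin_op (\<lambda>x. T (y x))" using cT cy by auto
    show "T (y (T (T (y x)))) = T (y x)" for x using f1 by simp
    show "T (T (y x)) = T (y (T x))" for x using comm by simp
    show "quasinilpotent_op (\<lambda>x. T x - T (T (T (y x))))" using qu unfolding u_def[abs_def] .
  qed
qed

lemma qnil_lower:
  fixes t :: "'x::complex_normed_vector \<Rightarrow> 'x" and k :: "'x \<Rightarrow> 'y::complex_normed_vector"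
    and s :: "'y \<Rightarrow> 'y"
  assumes blt: "bounded_linear t" and blk: "bounded_linear k" and bls: "bounded_linear s"
    and qt: "quasinilpotent_op t" and qs: "quasinilpotent_op s"
  shows "quasinilpotent_op (\<lambda>z. (t (fst z), k (fst z) + s (snd z)))"
proof -
  define t1 where "t1 z = (t (fst z), k (fst z))" for z :: "'x \<times> 'y"
  define t2 where "t2 z = ((0::'x), s (snd z))" for z :: "'x \<times> 'y"
  have bl1: "bounded_linear t1" unfolding t1_def[abs_def]
    by (intro bounded_linear_Pair bounded_linear_compose[OF blt] bounded_linear_compose[OF blk] bounded_linear_fst)
  have bl2: "bounded_linear t2" unfolding t2_def[abs_def]
    by (intro bounded_linear_Pair bounded_linear_zero bounded_linear_compose[OF bls] bounded_linear_snd)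
  have z: "t1 (t2 z) = 0" for z unfolding t1_def t2_def using linear_simps(3)[OF blt] linear_simps(3)[OF blk] by (simp add: zero_prod_def)
  have p1: "t1^^(Suc n) = (\<lambda>v. (t v, k v)) \<circ> (t^^n) \<circ> fst" for n
    by (induction n) (auto simp: fun_eq_iff t1_def)
  have p2: "t2^^(Suc n) = (\<lambda>v. ((0::'x), s v)) \<circ> (s^^n) \<circ> snd" for n
    by (induction n) (auto simp: fun_eq_iff t2_def)
  have q1: "quasinilpotent_op t1"
    by (rule qnil_factor[OF bl1 _ bounded_linear_fst blt qt p1])
       (intro bounded_linear_Pair blt blk)
  have q2: "quasinilpotent_op t2"
    by (rule qnil_factor[OF bl2 _ bounded_linear_snd bls qs p2])
       (intro bounded_linear_Pair bls bounded_linear_zero)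
  have "quasinilpotent_op (\<lambda>z. t1 z + t2 z)" by (rule qnil_zero_prod[OF bl1 bl2 z q1 q2])
  moreover have "(\<lambda>z. t1 z + t2 z) = (\<lambda>z. (t (fst z), k (fst z) + s (snd z)))"
    by (auto simp: fun_eq_iff t1_def t2_def)
  ultimately show ?thesis by simp
qed



lemma summable_qnil:
  fixes t :: "'a::complex_normed_vector \<Rightarrow> 'a"
  assumes blt: "bounded_linear t" and qt: "quasinilpotent_op t" and B: "B \<ge> 0"
  shows "summable (\<lambda>n. B^n * onorm (t^^n))"
proof -
  define e where "e = 1 / (2 * (B + 1))"
  have e: "e > 0" unfolding e_def using B by simp
  obtain K where K: "\<forall>n. onorm (t^^n) \<le> K * e^n" using qnil_imp_K[OF blt qt e] by auto
  have K0: "K \<ge> 0" using K[rule_format, of 0] onorm_pos_le[OF bl_funpow[OF blt], of 0] by simp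
  have Be: "B * e \<le> 1/2" "B * e \<ge> 0" unfolding e_def using B by (auto simp: field_simps)
  show ?thesis
  proof (rule summable_comparison_test)
    show "\<exists>N. \<forall>n\<ge>N. norm (B^n * onorm (t^^n)) \<le> K * (1/2)^n"
    proof (intro exI allI impI)
      fix n :: nat
      have "norm (B^n * onorm (t^^n)) = B^n * onorm (t^^n)"
        using B onorm_pos_le[OF bl_funpow[OF blt]] by simp
      also have "\<dots> \<le> B^n * (K * e^n)" using K B by (intro mult_left_mono) auto
      also have "\<dots> = K * (B * e)^n" by (simp add: power_mult_distrib)
      also have "\<dots> \<le> K * (1/2)^n" using Be K0 by (intro mult_left_mono power_mono) auto
      finally show "norm (B^n * onorm (t^^n)) \<le> K * (1/2)^n" .
    qed
    show "summable (\<lambda>n. K * (1/2::real)^n)" by (intro summable_mult summable_geometric) simp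
  qed
qed

lemma norm_chain: "bounded_linear f \<Longrightarrow> norm y \<le> B \<Longrightarrow> norm (f y) \<le> onorm f * B"
  by (rule order_trans[OF onorm]) (auto intro: mult_left_mono onorm_pos_le)

lemma norm_chain_pow:
  fixes f :: "'a::real_normed_vector \<Rightarrow> 'a"
  assumes bl: "bounded_linear f" and y: "norm y \<le> B"
  shows "norm ((f^^n) y) \<le> onorm f ^ n * B"
proof -
  have B0: "B \<ge> 0" using y norm_ge_zero order_trans by blast
  have "norm ((f^^n) y) \<le> onorm (f^^n) * B" by (rule norm_chain[OF bl_funpow[OF bl] y])
  also have "\<dots> \<le> onorm f ^ n * B" by (rule mult_right_mono[OF onorm_funpow[OF bl] B0])
  finally show ?thesis .
qed

lemma series_op:
  fixes F :: "nat \<Rightarrow> 'x::complex_normed_vector \<Rightarrow> 'y::{complex_normed_vector,banach}"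
  assumes cF: "\<And>n. clin_op (F n)" and bd: "\<And>n z. norm (F n z) \<le> G n * norm z" and sG: "summable G"
  shows series_op_summable: "summable (\<lambda>n. F n z)" and series_op_clin: "clin_op (\<lambda>z. \<Sum>n. F n z)"
proof -
  have sm: "summable (\<lambda>n. F n z)" for z
  proof (rule summable_comparison_test)
    show "\<exists>N. \<forall>n\<ge>N. norm (F n z) \<le> G n * norm z" using bd by blast
    show "summable (\<lambda>n. G n * norm z)" by (rule summable_mult2[OF sG])
  qed
  then show "summable (\<lambda>n. F n z)" .
  have blF: "bounded_linear (F n)" for n using cF[of n] by (rule clin_opD)
  have bl: "bounded_linear (\<lambda>z. \<Sum>n. F n z)"
  proof (rule bounded_linear_intro[where K="suminf G"])
    fix x y
    show "(\<Sum>n. F n (x + y)) = (\<Sum>n. F n x) + (\<Sum>n. F n y)"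
      using suminf_add[OF sm[of x] sm[of y]] by (simp add: linear_simps[OF blF])
  next
    fix r x
    show "(\<Sum>n. F n (r *\<^sub>R x)) = r *\<^sub>R (\<Sum>n. F n x)"
      using suminf_scaleR_right[OF sm[of x], of r] by (simp add: linear_simps[OF blF])
  next
    fix x
    have "norm (\<Sum>n. F n x) \<le> (\<Sum>n. G n * norm x)"
      by (rule norm_suminf_le[OF bd summable_mult2[OF sG]])
    also have "\<dots> = norm x * suminf G" using suminf_mult2[OF sG, of "norm x"] by (simp add: mult.commute)
    finally show "norm (\<Sum>n. F n x) \<le> norm x * suminf G" .
  qed
  have "(\<Sum>n. F n (c *\<^sub>C x)) = c *\<^sub>C (\<Sum>n. F n x)" for c x
    using bounded_linear.suminf[OF bounded_linear_scaleC sm[of x], of c]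
    by (simp add: clin_op_scaleC[OF cF])
  then show "clin_op (\<lambda>z. \<Sum>n. F n z)" using bl unfolding clin_op_def by simp
qed



locale tri =
  fixes a :: "'x::complex_normed_vector \<Rightarrow> 'x" and \<alpha> :: "'x \<Rightarrow> 'x"
    and b :: "'y::{complex_normed_vector,banach} \<Rightarrow> 'y" and \<beta> :: "'y \<Rightarrow> 'y" and c :: "'x \<Rightarrow> 'y"
  assumes ca: "clin_op a" and cb: "clin_op b" and cc: "clin_op c" and ga: "gd a \<alpha>" and gb: "gd b \<beta>"
begin

lemma c\<alpha>: "clin_op \<alpha>" using gdD(1)[OF ga] .
lemma c\<beta>: "clin_op \<beta>" using gdD(1)[OF gb] .
lemma bla: "bounded_linear a" using ca by (rule clin_opD)
lemma blb: "bounded_linear b" using cb by (rule clin_opD)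
lemma blc: "bounded_linear c" using cc by (rule clin_opD)
lemma bl\<alpha>: "bounded_linear \<alpha>" using c\<alpha> by (rule clin_opD)
lemma bl\<beta>: "bounded_linear \<beta>" using c\<beta> by (rule clin_opD)
lemmas la = linear_simps[OF bla] and lb = linear_simps[OF blb] and lc = linear_simps[OF blc]
  and l\<alpha> = linear_simps[OF bl\<alpha>] and l\<beta> = linear_simps[OF bl\<beta>]

lemma caa: "a (\<alpha> z) = \<alpha> (a z)" using gdD(3)[OF ga] .
lemma cbb: "b (\<beta> z) = \<beta> (b z)" using gdD(3)[OF gb] .
lemma ra: "\<alpha> (\<alpha> (a z)) = \<alpha> z" using gdD(2)[OF ga] caa by metis
lemma rb: "\<beta> (\<beta> (b z)) = \<beta> z" using gdD(2)[OF gb] cbb by metis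

lemmas nf = la lb lc l\<alpha> l\<beta> caa cbb ra rb

definition "pa z = z - \<alpha> (a z)"
definition "pb z = z - \<beta> (b z)"
definition "ta z = a z - a (a (\<alpha> z))"
definition "tb z = b z - b (b (\<beta> z))"

lemma qta: "quasinilpotent_op ta" using gdD(4)[OF ga] unfolding ta_def[abs_def] .
lemma qtb: "quasinilpotent_op tb" using gdD(4)[OF gb] unfolding tb_def[abs_def] .

lemma cpa: "clin_op pa" unfolding pa_def[abs_def] by (rule clin_op_diff[OF clin_op_ident clin_op_comp'[OF c\<alpha> ca]])
lemma cpb: "clin_op pb" unfolding pb_def[abs_def] by (rule clin_op_diff[OF clin_op_ident clin_op_comp'[OF c\<beta> cb]])
lemma blpa: "bounded_linear pa" using cpa by (rule clin_opD)
lemma blpb: "bounded_linear pb" using cpb by (rule clin_opD)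
lemma blta: "bounded_linear ta" unfolding ta_def[abs_def]
  by (intro bounded_linear_sub bla bounded_linear_compose[OF bla] bounded_linear_compose[OF bl\<alpha>] bounded_linear_ident)
lemma bltb: "bounded_linear tb" unfolding tb_def[abs_def]
  by (intro bounded_linear_sub blb bounded_linear_compose[OF blb] bounded_linear_compose[OF bl\<beta>] bounded_linear_ident)

lemma pa_a: "pa (a z) = a (pa z)" unfolding pa_def by (simp add: nf)
lemma pb_b: "pb (b z) = b (pb z)" unfolding pb_def by (simp add: nf)
lemma pa_pa: "pa (pa z) = pa z" unfolding pa_def by (simp add: nf)
lemma pb_pb: "pb (pb z) = pb z" unfolding pb_def by (simp add: nf)
lemma ta_eq: "ta z = a (pa z)" unfolding ta_def pa_def by (simp add: nf)
lemma tb_eq: "tb z = b (pb z)" unfolding tb_def pb_def by (simp add: nf)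

lemma pa_pow: "pa ((a^^n) z) = (a^^n) (pa z)"
  by (rule funpow_comm_pt) (rule pa_a[symmetric])
lemma pb_pow: "pb ((b^^n) z) = (b^^n) (pb z)"
  by (rule funpow_comm_pt) (rule pb_b[symmetric])

lemma ta_pow: "(ta^^n) (pa z) = (a^^n) (pa z)"
proof (induction n)
  case 0 then show ?case by simp
next
  case (Suc n)
  have "(ta^^Suc n) (pa z) = ta ((ta^^n) (pa z))" by simp
  also have "\<dots> = ta ((a^^n) (pa z))" using Suc by simp
  also have "\<dots> = a (pa ((a^^n) (pa z)))" by (rule ta_eq)
  also have "\<dots> = (a^^Suc n) (pa z)" by (simp add: pa_pow pa_pa)
  finally show ?case .
qed

lemma tb_pow: "(tb^^n) (pb z) = (b^^n) (pb z)"
proof (induction n)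
  case 0 then show ?case by simp
next
  case (Suc n)
  have "(tb^^Suc n) (pb z) = tb ((tb^^n) (pb z))" by simp
  also have "\<dots> = tb ((b^^n) (pb z))" using Suc by simp
  also have "\<dots> = b (pb ((b^^n) (pb z)))" by (rule tb_eq)
  also have "\<dots> = (b^^Suc n) (pb z)" by (simp add: pb_pow pb_pb)
  finally show ?case .
qed

definition "term1 n = \<beta> \<circ> \<beta> \<circ> (\<beta>^^n) \<circ> c \<circ> (a^^n) \<circ> pa"
definition "term2 n = pb \<circ> (b^^n) \<circ> c \<circ> (\<alpha>^^n) \<circ> \<alpha> \<circ> \<alpha>"

lemma term1_eq: "term1 n z = \<beta> (\<beta> ((\<beta>^^n) (c ((a^^n) (pa z)))))" by (simp add: term1_def)
lemma term2_eq: "term2 n z = pb ((b^^n) (c ((\<alpha>^^n) (\<alpha> (\<alpha> z)))))" by (simp add: term2_def)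

lemma cterm1: "clin_op (term1 n)" unfolding term1_def
  using c\<beta> cc cpa ca by (intro clin_op_comp clin_op_funpow)
lemma cterm2: "clin_op (term2 n)" unfolding term2_def
  using c\<alpha> cc cpb cb by (intro clin_op_comp clin_op_funpow)

definition "G1 n = (onorm \<beta> * onorm \<beta> * onorm c * onorm pa) * (onorm \<beta> ^ n * onorm (ta^^n))"
definition "G2 n = (onorm pb * onorm c * onorm \<alpha> * onorm \<alpha>) * (onorm \<alpha> ^ n * onorm (tb^^n))"

lemma sG1: "summable G1" unfolding G1_def
  by (intro summable_mult summable_qnil[OF blta qta] onorm_pos_le[OF bl\<beta>])
lemma sG2: "summable G2" unfolding G2_def
  by (intro summable_mult summable_qnil[OF bltb qtb] onorm_pos_le[OF bl\<alpha>])

lemma bd1: "norm (term1 n z) \<le> G1 n * norm z"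
proof -
  have "norm (term1 n z) = norm (\<beta> (\<beta> ((\<beta>^^n) (c ((ta^^n) (pa z))))))" by (simp add: term1_eq ta_pow)
  also have "\<dots> \<le> onorm \<beta> * (onorm \<beta> * (onorm \<beta> ^ n * (onorm c * (onorm (ta^^n) * (onorm pa * norm z)))))"
    by (intro norm_chain[OF bl\<beta>] norm_chain_pow[OF bl\<beta>] norm_chain[OF blc] norm_chain[OF bl_funpow[OF blta]]
        onorm[OF blpa])
  also have "\<dots> = G1 n * norm z" unfolding G1_def by (simp add: mult_ac)
  finally show ?thesis .
qed

lemma bd2: "norm (term2 n z) \<le> G2 n * norm z"
proof -
  have "norm (term2 n z) = norm ((tb^^n) (pb (c ((\<alpha>^^n) (\<alpha> (\<alpha> z))))))" by (simp add: term2_eq tb_pow pb_pow)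
  also have "\<dots> \<le> onorm (tb^^n) * (onorm pb * (onorm c * (onorm \<alpha> ^ n * (onorm \<alpha> * (onorm \<alpha> * norm z)))))"
    by (intro norm_chain[OF bl\<alpha>] norm_chain_pow[OF bl\<alpha>] norm_chain[OF blc] norm_chain[OF bl_funpow[OF bltb]]
        norm_chain[OF blpb] onorm[OF bl\<alpha>])
  also have "\<dots> = G2 n * norm z" unfolding G2_def by (simp add: mult_ac)
  finally show ?thesis .
qed

definition "w1 z = (\<Sum>n. term1 n z)"
definition "w2 z = (\<Sum>n. term2 n z)"
definition "w3 z = - \<beta> (c (\<alpha> z))"
definition "w z = w1 z + w2 z + w3 z"

lemma sm1: "summable (\<lambda>n. term1 n z)" by (rule series_op_summable[OF cterm1 bd1 sG1])
lemma sm2: "summable (\<lambda>n. term2 n z)" by (rule series_op_summable[OF cterm2 bd2 sG2])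
lemma cw1: "clin_op w1" unfolding w1_def[abs_def] by (rule series_op_clin[OF cterm1 bd1 sG1])
lemma cw2: "clin_op w2" unfolding w2_def[abs_def] by (rule series_op_clin[OF cterm2 bd2 sG2])
lemma cw3: "clin_op w3" unfolding w3_def[abs_def] by (rule clin_op_minus[OF clin_op_comp'[OF c\<beta> clin_op_comp'[OF cc c\<alpha>]]])
lemma cw: "clin_op w" unfolding w_def[abs_def] by (rule clin_op_add[OF clin_op_add[OF cw1 cw2] cw3])
lemma blw: "bounded_linear w" using cw by (rule clin_opD)
lemma blw1: "bounded_linear w1" using cw1 by (rule clin_opD)
lemma blw2: "bounded_linear w2" using cw2 by (rule clin_opD)
lemma blw3: "bounded_linear w3" using cw3 by (rule clin_opD)

end



context tri begin

lemma E1: "b (w z) - w (a z) = \<beta> (c z) - c (\<alpha> z)"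
proof -
  define f where "f n = \<beta> ((\<beta>^^n) (c ((a^^n) (pa z))))" for n
  have bt1: "b (term1 n z) = f n" for n unfolding f_def by (simp add: term1_eq cbb rb)
  have t1a: "term1 n (a z) = f (Suc n)" for n unfolding f_def by (simp add: term1_eq pa_a funpow_swap1)
  have sf: "summable f" using bounded_linear.summable[OF blb sm1[of z]] by (simp add: bt1)
  have bw1: "b (w1 z) = suminf f" unfolding w1_def using bounded_linear.suminf[OF blb sm1[of z]] by (simp add: bt1)
  have w1a: "w1 (a z) = suminf f - f 0" unfolding w1_def by (simp add: t1a suminf_split_head[OF sf])
  define g where "g n = pb ((b^^n) (c ((\<alpha>^^n) (\<alpha> z))))" for n
  have bt2: "b (term2 n z) = g (Suc n)" for n unfolding g_def by (simp add: term2_eq pb_b[symmetric] funpow_swap1)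
  have t2a: "term2 n (a z) = g n" for n unfolding g_def by (simp add: term2_eq ra)
  have sg: "summable g" using sm2[of "a z"] by (simp add: t2a)
  have bw2: "b (w2 z) = suminf g - g 0" unfolding w2_def using bounded_linear.suminf[OF blb sm2[of z]]
    by (simp add: bt2 suminf_split_head[OF sg])
  have w2a: "w2 (a z) = suminf g" unfolding w2_def by (simp add: t2a)
  have "b (w z) - w (a z) = (b (w1 z) - w1 (a z)) + (b (w2 z) - w2 (a z)) + (b (w3 z) - w3 (a z))"
    unfolding w_def by (simp add: lb)
  also have "\<dots> = f 0 - g 0 + (b (w3 z) - w3 (a z))" by (simp add: bw1 w1a bw2 w2a)
  also have "\<dots> = \<beta> (c z) - c (\<alpha> z)"
    unfolding f_def g_def w3_def pa_def pb_def by (simp add: nf)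
  finally show ?thesis .
qed

lemma E2: "w (\<alpha> (a z)) + \<beta> (c (\<alpha> z)) + \<beta> (b (w z)) = w z"
proof -
  have z0: "pa (\<alpha> (a z)) = 0" unfolding pa_def by (simp add: nf)
  have p0: "(f^^n) 0 = 0" if "bounded_linear f" for f :: "'v::real_normed_vector \<Rightarrow> 'v" and n
    by (rule linear_simps(3)[OF bl_funpow[OF that]])
  have w1z: "w1 (\<alpha> (a z)) = 0" unfolding w1_def
    by (simp add: term1_eq z0 p0[OF bla] p0[OF bl\<beta>] lc l\<beta>)
  have w2z: "w2 (\<alpha> (a z)) = w2 z" unfolding w2_def by (simp add: term2_eq ra)
  have w3z: "w3 (\<alpha> (a z)) = w3 z" unfolding w3_def by (simp add: ra)
  have bw1: "\<beta> (b (w1 z)) = w1 z"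
  proof -
    have "\<beta> (b (w1 z)) = (\<Sum>n. \<beta> (b (term1 n z)))" unfolding w1_def
      using bounded_linear.suminf[OF bounded_linear_compose[OF bl\<beta> blb] sm1[of z]] by simp
    also have "\<dots> = w1 z" unfolding w1_def by (simp add: term1_eq cbb rb)
    finally show ?thesis .
  qed
  have bw2: "\<beta> (b (w2 z)) = 0"
  proof -
    have "\<beta> (b (w2 z)) = (\<Sum>n. \<beta> (b (term2 n z)))" unfolding w2_def
      using bounded_linear.suminf[OF bounded_linear_compose[OF bl\<beta> blb] sm2[of z]] by simp
    also have "\<dots> = 0" by (simp add: term2_eq pb_def nf)
    finally show ?thesis .
  qed
  have bw3: "\<beta> (b (w3 z)) = w3 z" unfolding w3_def by (simp add: nf)
  have "w (\<alpha> (a z)) + \<beta> (c (\<alpha> z)) + \<beta> (b (w z)) =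
      (w1 (\<alpha> (a z)) + w2 (\<alpha> (a z)) + w3 (\<alpha> (a z))) + \<beta> (c (\<alpha> z)) + (\<beta> (b (w1 z)) + \<beta> (b (w2 z)) + \<beta> (b (w3 z)))"
    unfolding w_def by (simp add: lb l\<beta>)
  also have "\<dots> = w z" unfolding w_def by (simp add: w1z w2z w3z bw1 bw2 bw3) (simp add: w3_def)
  finally show ?thesis .
qed

definition "NN z = (a (fst z), c (fst z) + b (snd z))"
definition "SS z = (\<alpha> (fst z), w (fst z) + \<beta> (snd z))"

lemma tri_gd0: "gd NN SS"
  unfolding gd_def
proof (intro conjI allI)
  show "clin_op SS" unfolding SS_def[abs_def]
    by (rule clin_op_Pair[OF clin_op_comp'[OF c\<alpha> clin_op_fst] clin_op_add[OF clin_op_comp'[OF cw clin_op_fst] clin_op_comp'[OF c\<beta> clin_op_snd]]])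
next
  fix z :: "'x \<times> 'y"
  obtain x y where z: "z = (x, y)" by (cases z)
  have e2: "w (\<alpha> (a x)) + \<beta> (c (\<alpha> x)) + \<beta> (b (w x)) = w x" by (rule E2)
  have "w (a (\<alpha> x)) + \<beta> (c (\<alpha> x) + b (w x + \<beta> y)) = (w (\<alpha> (a x)) + \<beta> (c (\<alpha> x)) + \<beta> (b (w x))) + \<beta> y"
    by (simp add: nf linear_simps[OF blw])
  then show "SS (NN (SS z)) = SS z"
    using e2 z unfolding SS_def NN_def by (simp add: caa ra)
next
  fix z :: "'x \<times> 'y"
  obtain x y where z: "z = (x, y)" by (cases z)
  have e1: "b (w x) = w (a x) + \<beta> (c x) - c (\<alpha> x)" using E1[of x] by (simp add: algebra_simps)
  show "NN (SS z) = SS (NN z)"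
    using z unfolding SS_def NN_def by (simp add: lb l\<beta> e1 caa cbb)
next
  define k where "k x = c x - c (a (\<alpha> x)) - b (c (\<alpha> x)) - b (b (w x))" for x
  have blk: "bounded_linear k" unfolding k_def[abs_def]
    by (intro bounded_linear_sub blc bounded_linear_compose[OF blc] bounded_linear_compose[OF bla]
        bounded_linear_compose[OF bl\<alpha>] bounded_linear_compose[OF blb] blw bounded_linear_ident)
  have q: "quasinilpotent_op (\<lambda>z. (ta (fst z), k (fst z) + tb (snd z)))"
    by (rule qnil_lower[OF blta blk bltb qta qtb])
  have eq: "(\<lambda>z. (ta (fst z), k (fst z) + tb (snd z))) = (\<lambda>x. NN x - NN (NN (SS x)))"
    unfolding ta_def tb_def k_def NN_def SS_def by (auto simp: fun_eq_iff lb lc)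
  show "quasinilpotent_op (\<lambda>x. NN x - NN (NN (SS x)))"
    using q eq by simp
qed

lemma tri_gd: "has_gDrazin (\<lambda>z. (a (fst z), c (fst z) + b (snd z)))"
  using tri_gd0 unfolding has_gDrazin_iff NN_def[abs_def] by blast

end



lemma hg_lower_tri:
  fixes a :: "'x::complex_normed_vector \<Rightarrow> 'x" and b :: "'y::{complex_normed_vector,banach} \<Rightarrow> 'y"
    and c :: "'x \<Rightarrow> 'y"
  assumes ca: "clin_op a" and cb: "clin_op b" and cc: "clin_op c"
    and ha: "has_gDrazin a" and hb: "has_gDrazin b"
  shows "has_gDrazin (\<lambda>z. (a (fst z), c (fst z) + b (snd z)))"
proof -
  obtain \<alpha> where ga: "gd a \<alpha>" using ha unfolding has_gDrazin_iff by blast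
  obtain \<beta> where gb: "gd b \<beta>" using hb unfolding has_gDrazin_iff by blast
  interpret tri a \<alpha> b \<beta> c by (rule tri.intro[OF ca cb cc ga gb])
  show ?thesis by (rule tri_gd)
qed

lemma hg_cline:
  fixes U :: "'b::complex_normed_vector \<Rightarrow> 'a::complex_normed_vector" and V :: "'a \<Rightarrow> 'b"
  assumes cU: "clin_op U" and cV: "clin_op V" and h: "has_gDrazin (\<lambda>x. V (U x))"
  shows "has_gDrazin (\<lambda>x. U (V x))"
  using h gd_cline[OF cU cV] unfolding has_gDrazin_iff by blast

lemma hg_square:
  fixes A :: "'a::complex_normed_vector \<Rightarrow> 'a"
  assumes cA: "clin_op A" and h: "has_gDrazin A"
  shows "has_gDrazin (\<lambda>x. A (A x))"
  using h gd_square[OF cA] unfolding has_gDrazin_iff by blast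

lemma hg_sqrt:
  fixes T :: "'a::complex_normed_vector \<Rightarrow> 'a"
  assumes cT: "clin_op T" and h: "has_gDrazin (\<lambda>x. T (T x))"
  shows "has_gDrazin T"
  using h gd_sqrt[OF cT] unfolding has_gDrazin_iff by blast

lemma hg_nil:
  fixes T :: "'a::complex_normed_vector \<Rightarrow> 'a"
  assumes cT: "clin_op T" and z: "T^^k = (\<lambda>_. 0)"
  shows "has_gDrazin T"
  using gd_nil[OF cT z] unfolding has_gDrazin_iff by blast

lemma hg_add_zero_prod:
  fixes a b :: "'x::{complex_normed_vector,banach} \<Rightarrow> 'x"
  assumes ca: "clin_op a" and cb: "clin_op b" and ha: "has_gDrazin a" and hb: "has_gDrazin b"
    and z: "\<And>x. a (b x) = 0"
  shows "has_gDrazin (\<lambda>x. a x + b x)"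
proof -
  have bla: "bounded_linear a" and blb: "bounded_linear b" using ca cb by (auto dest: clin_opD)
  define U where "U z = fst z + b (snd z)" for z :: "'x \<times> 'x"
  define V where "V x = (a x, x)" for x :: 'x
  have cU: "clin_op U" unfolding U_def[abs_def]
    by (rule clin_op_add[OF clin_op_fst clin_op_comp'[OF cb clin_op_snd]])
  have cV: "clin_op V" unfolding V_def[abs_def] by (rule clin_op_Pair[OF ca clin_op_ident])
  have "has_gDrazin (\<lambda>z. (a (fst z), (\<lambda>x. x) (fst z) + b (snd z)))"
    by (rule hg_lower_tri[OF ca cb clin_op_ident ha hb])
  moreover have "(\<lambda>z. (a (fst z), (\<lambda>x. x) (fst z) + b (snd z))) = (\<lambda>x. V (U x))"
    unfolding U_def V_def by (auto simp: fun_eq_iff linear_simps[OF bla] z)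
  ultimately have "has_gDrazin (\<lambda>x. V (U x))" by simp
  then have "has_gDrazin (\<lambda>x. U (V x))" by (rule hg_cline[OF cU cV])
  moreover have "(\<lambda>x. U (V x)) = (\<lambda>x. a x + b x)" unfolding U_def V_def by simp
  ultimately show ?thesis by simp
qed



theorem theorem3p3:
  fixes A :: "'a::{complex_normed_vector, banach} \<Rightarrow> 'a"
    and B :: "'b::{complex_normed_vector, banach} \<Rightarrow> 'a"
    and C :: "'a \<Rightarrow> 'b"
    and D :: "'b \<Rightarrow> 'b"
  assumes "clin_op A" and "clin_op B" and "clin_op C" and "clin_op D"
    and "has_gDrazin A" and "has_gDrazin D"
    and "A \<circ> B \<circ> C = (\<lambda>_. 0)"
    and "A \<circ> B \<circ> D = (\<lambda>_. 0)"
    and "D \<circ> C \<circ> B = (\<lambda>_. 0)"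
    and "B \<circ> C \<circ> B \<circ> C = (\<lambda>_. 0)"
    and "B \<circ> C \<circ> B \<circ> D = (\<lambda>_. 0)"
  shows "has_gDrazin (op_matrix A B C D)"
proof -
  note cA = assms(1) and cB = assms(2) and cC = assms(3) and cD = assms(4)
  note hA = assms(5) and hD = assms(6)
  have z1: "\<And>x. A (B (C x)) = 0" using assms(7) by (simp add: fun_eq_iff)
  have z2: "\<And>x. A (B (D x)) = 0" using assms(8) by (simp add: fun_eq_iff)
  have z3: "\<And>x. D (C (B x)) = 0" using assms(9) by (simp add: fun_eq_iff)
  have z4: "\<And>x. B (C (B (C x))) = 0" using assms(10) by (simp add: fun_eq_iff)
  have z5: "\<And>x. B (C (B (D x))) = 0" using assms(11) by (simp add: fun_eq_iff)
  have blA: "bounded_linear A" and blB: "bounded_linear B" and blC: "bounded_linear C" and blD: "bounded_linear D"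
    using cA cB cC cD by (auto dest: clin_opD)
  note lA = linear_simps[OF blA] and lB = linear_simps[OF blB] and lC = linear_simps[OF blC] and lD = linear_simps[OF blD]
  note lin = lA lB lC lD
  define F where "F y = C (B y)" for y
  have cF: "clin_op F" unfolding F_def[abs_def] by (rule clin_op_comp'[OF cC cB])
  have F3: "F^^3 = (\<lambda>_. 0)"
  proof -
    have "F (F (F y)) = 0" for y unfolding F_def using z4[of "B y"] lC by simp
    then show ?thesis by (simp add: fun_eq_iff numeral_3_eq_3)
  qed
  have hF: "has_gDrazin F" by (rule hg_nil[OF cF F3])
  have cD2: "clin_op (\<lambda>y. D (D y))" by (rule clin_op_comp'[OF cD cD])
  have hD2: "has_gDrazin (\<lambda>y. D (D y))" by (rule hg_square[OF cD hD])
  define H where "H y = D (D y) + F y" for y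
  have cH: "clin_op H" unfolding H_def[abs_def] by (rule clin_op_add[OF cD2 cF])
  have hH: "has_gDrazin H"
    unfolding H_def[abs_def] by (rule hg_add_zero_prod[OF cD2 cF hD2 hF]) (simp add: F_def z3 lD)
  define G where "G x = C (A x) + D (C x)" for x
  have cG: "clin_op G" unfolding G_def[abs_def]
    by (rule clin_op_add[OF clin_op_comp'[OF cC cA] clin_op_comp'[OF cD cC]])
  have blG: "bounded_linear G" and blH: "bounded_linear H" using cG cH by (auto dest: clin_opD)
  note lG = linear_simps[OF blG] and lH = linear_simps[OF blH]
  define U1 where "U1 y = ((0::'a), y)" for y :: 'b
  define V1 where "V1 z = G (fst z) + H (snd z)" for z :: "'a \<times> 'b"
  have cU1: "clin_op U1" unfolding U1_def[abs_def] by (rule clin_op_Pair[OF clin_op_zero clin_op_ident])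
  have cV1: "clin_op V1" unfolding V1_def[abs_def]
    by (rule clin_op_add[OF clin_op_comp'[OF cG clin_op_fst] clin_op_comp'[OF cH clin_op_snd]])
  have "(\<lambda>y. V1 (U1 y)) = H" unfolding U1_def V1_def by (simp add: fun_eq_iff lG)
  then have "has_gDrazin (\<lambda>y. V1 (U1 y))" using hH by simp
  then have hR2: "has_gDrazin (\<lambda>z. U1 (V1 z))" by (rule hg_cline[OF cU1 cV1])
  have cR2: "clin_op (\<lambda>z. U1 (V1 z))" by (rule clin_op_comp'[OF cU1 cV1])
  define R1 where "R1 z = (B (C (fst z)) + B (D (snd z)), (0::'b))" for z :: "'a \<times> 'b"
  have cR1: "clin_op R1" unfolding R1_def[abs_def]
    by (rule clin_op_Pair[OF clin_op_add[OF clin_op_comp'[OF cB clin_op_comp'[OF cC clin_op_fst]] clin_op_comp'[OF cB clin_op_comp'[OF cD clin_op_snd]]] clin_op_zero])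
  have R1sq: "R1^^2 = (\<lambda>_. 0)"
  proof -
    have "R1 (R1 z) = 0" for z unfolding R1_def using z4 z5 by (simp add: lin zero_prod_def)
    then show ?thesis by (simp add: fun_eq_iff numeral_2_eq_2)
  qed
  have hR1: "has_gDrazin R1" by (rule hg_nil[OF cR1 R1sq])
  have R21: "U1 (V1 (R1 z)) = 0" for z
    unfolding U1_def V1_def R1_def G_def H_def F_def using z1 z2 z3
    by (simp add: lin zero_prod_def)
  define R where "R z = U1 (V1 z) + R1 z" for z
  have cR: "clin_op R" unfolding R_def[abs_def] by (rule clin_op_add[OF cR2 cR1])
  have hR: "has_gDrazin R" unfolding R_def[abs_def]
    by (rule hg_add_zero_prod[OF cR2 cR1 hR2 hR1 R21])
  define U2 where "U2 x = (x, (0::'b))" for x :: 'a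
  define V2 where "V2 z = A (A (fst z)) + A (B (snd z))" for z :: "'a \<times> 'b"
  have cU2: "clin_op U2" unfolding U2_def[abs_def] by (rule clin_op_Pair[OF clin_op_ident clin_op_zero])
  have cV2: "clin_op V2" unfolding V2_def[abs_def]
    by (rule clin_op_add[OF clin_op_comp'[OF cA clin_op_comp'[OF cA clin_op_fst]] clin_op_comp'[OF cA clin_op_comp'[OF cB clin_op_snd]]])
  have "(\<lambda>x. V2 (U2 x)) = (\<lambda>x. A (A x))" unfolding U2_def V2_def by (simp add: fun_eq_iff lin)
  then have "has_gDrazin (\<lambda>x. V2 (U2 x))" using hg_square[OF cA hA] by simp
  then have hP2: "has_gDrazin (\<lambda>z. U2 (V2 z))" by (rule hg_cline[OF cU2 cV2])
  have cP2: "clin_op (\<lambda>z. U2 (V2 z))" by (rule clin_op_comp'[OF cU2 cV2])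
  have P2R: "U2 (V2 (R z)) = 0" for z
    unfolding U2_def V2_def R_def U1_def V1_def R1_def G_def H_def F_def using z1 z2
    by (simp add: lin zero_prod_def)
  have hM2: "has_gDrazin (\<lambda>z. U2 (V2 z) + R z)"
    by (rule hg_add_zero_prod[OF cP2 cR hP2 hR P2R])
  define M where "M = op_matrix A B C D"
  have Mz: "M z = (A (fst z) + B (snd z), C (fst z) + D (snd z))" for z
    unfolding M_def op_matrix_def by (simp add: case_prod_beta)
  have cM: "clin_op M" unfolding Mz[abs_def]
    by (rule clin_op_Pair[OF clin_op_add[OF clin_op_comp'[OF cA clin_op_fst] clin_op_comp'[OF cB clin_op_snd]]
          clin_op_add[OF clin_op_comp'[OF cC clin_op_fst] clin_op_comp'[OF cD clin_op_snd]]])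
  have "(\<lambda>z. U2 (V2 z) + R z) = (\<lambda>z. M (M z))"
    unfolding Mz U2_def V2_def R_def U1_def V1_def R1_def G_def H_def F_def
    by (auto simp: fun_eq_iff lin algebra_simps)
  then have "has_gDrazin (\<lambda>z. M (M z))" using hM2 by simp
  then have "has_gDrazin M" by (rule hg_sqrt[OF cM])
  then show ?thesis unfolding M_def .
qed


end
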